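(* Let $m\ge2$ be an integer, $0\le\beta<1$ and $t\in\mathbb{C}\setminus\{0,1\}$. The exponential splines satisfy (i) $\Phi_{m-1}(\beta,t)=\dfrac{(-1)^m}{(m-1)!}G_m\!\left(\dfrac1t,\beta\right)$; (ii) $t(m-1)\Phi_{m-1}(\beta,t)=\big(m-1+\beta(t-1)\big)\Phi_{m-2}(\beta,t)+t(1-t)\Phi_{m-2}'(\beta,t)$, where $'$ denotes differentiation with respect to $t$.
   Context: B-splines: $Q_1=\chi_{[0,1)}$, $Q_{m+1}(x)=\int_{-\infty}^\infty Q_m(x-t)Q_1(t)dt$. Exponential spline of degree $m-1$: $\Phi_{m-1}(\beta,t)=\sum_{k\in\mathbb{Z}}t^kQ_m(\beta-k)$. Polynomials $G_m(t,\beta)$ are defined by $G_1(t,\beta)=-1$ and, for $m\ge2$, $G_m(t,\beta)=[\beta(t-1)-(m-1)t]G_{m-1}(t,\beta)+t(t-1)\frac{\partial}{\partial t}G_{m-1}(t,\beta)$. *)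

theory Defs
  imports "HOL-Analysis.Analysis" "HOL-Computational_Algebra.Polynomial"
begin

fun Bspline :: "nat \<Rightarrow> real \<Rightarrow> real" where
  "Bspline 0 x = 0"
| "Bspline (Suc 0) x = indicator {0..<1} x"
| "Bspline (Suc (Suc n)) x =
     integral UNIV (\<lambda>t. Bspline (Suc n) (x - t) * Bspline (Suc 0) t)"

definition expspline :: "nat \<Rightarrow> real \<Rightarrow> complex \<Rightarrow> complex" where
  "expspline n \<beta> t = (\<Sum>\<^sub>\<infinity>k\<in>(UNIV::int set). t powi k * complex_of_real (Bspline (Suc n) (\<beta> - of_int k)))"

fun Gpoly :: "nat \<Rightarrow> real \<Rightarrow> complex poly" where
  "Gpoly 0 \<beta> = 0"
| "Gpoly (Suc 0) \<beta> = [:-1:]"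
| "Gpoly (Suc (Suc n)) \<beta> =
     [: - complex_of_real \<beta>, complex_of_real \<beta> - of_nat (Suc n) :] * Gpoly (Suc n) \<beta>
     + [:0, -1, 1:] * pderiv (Gpoly (Suc n) \<beta>)"

end

theory Submission
  imports Defs
begin

definition tp :: "nat \<Rightarrow> real \<Rightarrow> real" where
  "tp n y = (if 0 \<le> y then y ^ n else 0)"

definition Dop :: "(real \<Rightarrow> real) \<Rightarrow> real \<Rightarrow> real" where
  "Dop f = (\<lambda>x. f x - f (x - 1))"

lemma tp_Suc_max: "tp (Suc k) y = (max y 0) ^ Suc k"
  by (simp add: tp_def max_def)

lemma tp_Suc_mult: "tp (Suc k) = (\<lambda>y. y * tp k y)"
  by (auto simp: tp_def fun_eq_iff)

lemma tp_deriv: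
  assumes "y \<noteq> 0"
  shows "(tp (Suc k) has_real_derivative real (Suc k) * tp k y) (at y)"
proof (cases "y > 0")
  case True
  have "((\<lambda>y. y ^ Suc k) has_real_derivative real (Suc k) * tp k y) (at y)"
    using DERIV_pow[of "Suc k" y] True by (simp add: tp_def)
  then show ?thesis
    apply (rule has_field_derivative_transform_within_open[where S="{0<..}"])
    using True by (auto simp: tp_def)
next
  case False
  then have "y < 0" using assms by simp
  have "((\<lambda>y. 0) has_real_derivative real (Suc k) * tp k y) (at y)"
    using \<open>y < 0\<close> by (auto intro!: derivative_eq_intros simp: tp_def)
  then show ?thesis
    apply (rule has_field_derivative_transform_within_open[where S="{..<0}"])
    using \<open>y < 0\<close> by (auto simp: tp_def)
qed

lemma tp_integral:
  "((\<lambda>s. tp k (a - s)) has_integral (tp (Suc k) a - tp (Suc k) (a - 1)) / real (Suc k)) {0..1}"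
proof -
  define F where "F s = - tp (Suc k) (a - s) / real (Suc k)" for s
  have "((\<lambda>s. tp k (a - s)) has_integral (F 1 - F 0)) {0..1}"
  proof (rule fundamental_theorem_of_calculus_interior_strong[where S="{a}"])
    show "continuous_on {0..1} F"
      unfolding F_def tp_Suc_max by (auto intro!: continuous_intros)
    fix x assume "x \<in> {0<..<1} - {a}"
    then have "a - x \<noteq> 0" by auto
    have "((\<lambda>s. tp (Suc k) (a - s)) has_real_derivative real (Suc k) * tp k (a - x) * (0 - 1)) (at x)"
      by (rule DERIV_chain2[where g="\<lambda>s. a - s", OF tp_deriv[OF \<open>a - x \<noteq> 0\<close>]]) (auto intro!: derivative_eq_intros)
    then have "(F has_real_derivative tp k (a - x)) (at x)"
      unfolding F_def by (auto intro!: derivative_eq_intros)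
    then show "(F has_vector_derivative tp k (a - x)) (at x)"
      by (simp add: has_real_derivative_iff_has_vector_derivative)
  qed auto
  moreover have "F 1 - F 0 = (tp (Suc k) a - tp (Suc k) (a - 1)) / real (Suc k)"
    unfolding F_def by (simp add: diff_divide_distrib)
  ultimately show ?thesis by simp
qed

lemma Dop_pow_Suc: "(Dop ^^ Suc n) f x = (Dop ^^ n) f x - (Dop ^^ n) f (x - 1)"
  by (simp add: Dop_def)

lemma Dop_pow_integral:
  assumes "\<And>a. ((\<lambda>s. g (a - s)) has_integral H a) {0..1}"
  shows "((\<lambda>s. (Dop ^^ n) g (a - s)) has_integral (Dop ^^ n) H a) {0..1}"
proof (induction n arbitrary: a)
  case 0
  then show ?case using assms by simp
next
  case (Suc n)
  have "((\<lambda>s. (Dop ^^ n) g (a - s) - (Dop ^^ n) g ((a - 1) - s)) has_integral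
      ((Dop ^^ n) H a - (Dop ^^ n) H (a - 1))) {0..1}"
    by (intro has_integral_diff Suc)
  moreover have "(\<lambda>s. (Dop ^^ n) g (a - s) - (Dop ^^ n) g ((a - 1) - s)) = (\<lambda>s. (Dop ^^ Suc n) g (a - s))"
    unfolding Dop_pow_Suc by (auto simp: fun_eq_iff algebra_simps)
  moreover have "(Dop ^^ Suc n) H a = (Dop ^^ n) H a - (Dop ^^ n) H (a - 1)"
    by (rule Dop_pow_Suc)
  ultimately show ?case by simp
qed

lemma Dop_pow_div: "(Dop ^^ n) (\<lambda>a. f a / c) = (\<lambda>a. (Dop ^^ n) f a / c)"
  by (induction n) (auto simp: Dop_def fun_eq_iff diff_divide_distrib)

lemma Dop_pow_X: "(Dop ^^ m) (\<lambda>y. y * f y) x = x * (Dop ^^ m) f x + real m * (Dop ^^ (m - 1)) f (x - 1)"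
proof (induction m arbitrary: x)
  case 0 then show ?case by simp
next
  case (Suc m)
  have "(Dop ^^ Suc m) (\<lambda>y. y * f y) x = (Dop ^^ m) (\<lambda>y. y * f y) x - (Dop ^^ m) (\<lambda>y. y * f y) (x - 1)"
    by (rule Dop_pow_Suc)
  also have "\<dots> = x * (Dop ^^ Suc m) f x + real (Suc m) * (Dop ^^ m) f (x - 1)"
  proof (cases m)
    case 0 then show ?thesis by (simp add: Dop_def algebra_simps)
  next
    case (Suc k)
    have e1: "(Dop ^^ m) f (x - 1) = (Dop ^^ (m - 1)) f (x - 1) - (Dop ^^ (m - 1)) f (x - 1 - 1)"
      using Dop_pow_Suc[of k f "x - 1"] Suc by simp
    have e2: "(Dop ^^ Suc m) f x = (Dop ^^ m) f x - (Dop ^^ m) f (x - 1)"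
      by (rule Dop_pow_Suc)
    show ?thesis unfolding Suc.IH e2
      by (simp del: funpow.simps add: e1 algebra_simps)
  qed
  finally show ?case by simp
qed

lemma Dop_pow_zero: "(\<And>y. y \<le> x \<Longrightarrow> f y = 0) \<Longrightarrow> (Dop ^^ m) f x = 0"
proof (induction m arbitrary: x)
  case 0 then show ?case by simp
next
  case (Suc m)
  then show ?case unfolding Dop_pow_Suc by simp
qed

definition T :: "nat \<Rightarrow> real \<Rightarrow> real" where
  "T m x = (Dop ^^ m) (tp (m - 1)) x / fact (m - 1)"

lemma T_integral: "((\<lambda>s. T (Suc n) (x - s)) has_integral T (Suc (Suc n)) x) {0..1}"
proof -
  have "((\<lambda>s. (Dop ^^ Suc n) (tp n) (x - s)) has_integral
      (Dop ^^ Suc n) (\<lambda>a. Dop (tp (Suc n)) a / real (Suc n)) x) {0..1}"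
    by (rule Dop_pow_integral) (simp only: Dop_def tp_integral)
  also have "(Dop ^^ Suc n) (\<lambda>a. Dop (tp (Suc n)) a / real (Suc n)) x
      = (Dop ^^ Suc (Suc n)) (tp (Suc n)) x / real (Suc n)"
    unfolding Dop_pow_div by (simp only: funpow_Suc_right o_def)
  finally have "((\<lambda>s. (Dop ^^ Suc n) (tp n) (x - s) / fact n) has_integral
      (Dop ^^ Suc (Suc n)) (tp (Suc n)) x / real (Suc n) / fact n) {0..1}"
    by (rule has_integral_divide)
  then show ?thesis unfolding T_def by (simp add: field_simps)
qed

lemma Bspline_T: "Bspline (Suc n) x = T (Suc n) x"
proof (induction n arbitrary: x)
  case 0
  show ?case by (simp add: T_def Dop_def tp_def split: split_indicator)
next
  case (Suc n)
  have h: "((\<lambda>s. if s \<in> {0..1} then T (Suc n) (x - s) else 0) has_integral T (Suc (Suc n)) x) UNIV"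
    unfolding has_integral_restrict_UNIV by (rule T_integral)
  have "((\<lambda>s. Bspline (Suc n) (x - s) * Bspline (Suc 0) s) has_integral T (Suc (Suc n)) x) UNIV"
    by (rule has_integral_spike[where S="{1}", OF _ _ h]) (auto simp: Suc.IH split: split_indicator)
  from integral_unique[OF this] show ?case by simp
qed


lemma T_neg: "x < 0 \<Longrightarrow> T m x = 0"
  unfolding T_def by (subst Dop_pow_zero) (auto simp: tp_def)

lemma T_big: "real (Suc n) \<le> x \<Longrightarrow> T (Suc n) x = 0"
proof (induction n arbitrary: x)
  case 0
  then show ?case by (simp add: T_def Dop_def tp_def)
next
  case (Suc n)
  have "((\<lambda>s. T (Suc n) (x - s)) has_integral 0) {0..1}"
    by (rule has_integral_spike[where S="{}", OF _ _ has_integral_0]) (use Suc in auto)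
  then show ?case using T_integral[of n x] has_integral_unique by blast
qed

lemma aux_div: "k > 0 \<Longrightarrow> c \<noteq> 0 \<Longrightarrow> k * (a / (k * c) + b / (k * c)) = a / c + b / (c::real)"
  by (simp add: field_simps)

lemma T_rec: "real (Suc n) * T (Suc (Suc n)) x = x * T (Suc n) x + (real n + 2 - x) * T (Suc n) (x - 1)"
proof -
  define A where "A = (Dop ^^ Suc n) (tp n)"
  have "(Dop ^^ Suc (Suc n)) (tp (Suc n)) x = x * (Dop ^^ Suc (Suc n)) (tp n) x + real (Suc (Suc n)) * A (x - 1)"
    unfolding tp_Suc_mult A_def by (subst Dop_pow_X) simp
  also have "(Dop ^^ Suc (Suc n)) (tp n) x = A x - A (x - 1)"
    unfolding A_def by (rule Dop_pow_Suc)
  finally have "(Dop ^^ Suc (Suc n)) (tp (Suc n)) x = x * A x + (real n + 2 - x) * A (x - 1)"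
    by (simp add: algebra_simps)
  moreover have "fact (Suc n) = real (Suc n) * fact n" by simp
  ultimately show ?thesis unfolding T_def A_def
    by (simp del: fact_Suc of_nat_Suc add: add_divide_distrib aux_div)
qed

lemma Q_rec: "real (Suc n) * Bspline (Suc (Suc n)) x = x * Bspline (Suc n) x + (real n + 2 - x) * Bspline (Suc n) (x - 1)"
  unfolding Bspline_T by (rule T_rec)

lemma Q_neg: "x < 0 \<Longrightarrow> Bspline (Suc n) x = 0"
  unfolding Bspline_T by (rule T_neg)

lemma Q_big: "real (Suc n) \<le> x \<Longrightarrow> Bspline (Suc n) x = 0"
  unfolding Bspline_T by (rule T_big)

lemma coeff_step:
  fixes a b :: complex
  shows "coeff ([:a, b:] * g + [:0, -1, 1:] * pderiv g) j =
    (if j = 0 then a * coeff g 0 else a * coeff g j + b * coeff g (j - 1) - of_nat j * coeff g j + of_nat (j - 1) * coeff g (j - 1))"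
  by (cases j) (auto simp: coeff_pderiv mult_pCons_left coeff_pCons split: nat.split)

lemma coeff_G:
  assumes "0 \<le> \<beta>" "\<beta> < 1"
  shows "coeff (Gpoly (Suc n) \<beta>) j = complex_of_real ((-1) ^ Suc n * fact n * Bspline (Suc n) (\<beta> + real j))"
proof (induction n arbitrary: j)
  case 0
  then show ?case using assms by (cases j) (auto split: split_indicator)
next
  case (Suc n)
  define c :: real where "c = (-1) ^ Suc n * fact n"
  have IH: "coeff (Gpoly (Suc n) \<beta>) i = complex_of_real (c * Bspline (Suc n) (\<beta> + real i))" for i
    using Suc.IH c_def by simp
  have R: "real (Suc n) * Bspline (Suc (Suc n)) (\<beta> + real j) = (\<beta> + real j) * Bspline (Suc n) (\<beta> + real j) + (real n + 2 - (\<beta> + real j)) * Bspline (Suc n) (\<beta> + real j - 1)"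
    by (rule Q_rec)
  have tgt: "(-1) ^ Suc (Suc n) * fact (Suc n) * Bspline (Suc (Suc n)) (\<beta> + real j) = - c * (real (Suc n) * Bspline (Suc (Suc n)) (\<beta> + real j))"
    by (simp add: c_def)
  show ?case
  proof (cases j)
    case 0
    have "Bspline (Suc n) (\<beta> - 1) = 0" using assms by (intro Q_neg) simp
    then show ?thesis unfolding tgt R using 0
      by (simp add: coeff_step IH)
  next
    case (Suc i)
    have "\<beta> + real j - 1 = \<beta> + real i" using Suc by simp
    then show ?thesis unfolding tgt R Gpoly.simps(3) coeff_step using Suc
      by (simp add: IH algebra_simps)
  qed
qed

lemma expspline_sum:
  assumes "0 \<le> \<beta>" "\<beta> < 1"
  shows "expspline n \<beta> t = (\<Sum>j\<le>n. (1 / t) ^ j * complex_of_real (Bspline (Suc n) (\<beta> + real j)))"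
proof -
  define f where "f k = t powi k * complex_of_real (Bspline (Suc n) (\<beta> - of_int k))" for k
  define S where "S = (\<lambda>j. - int j) ` {..n}"
  have "expspline n \<beta> t = infsum f UNIV" unfolding expspline_def f_def by simp
  also have "\<dots> = infsum f S"
  proof (rule infsum_cong_neutral)
    fix k assume kS: "k \<in> UNIV - S"
    have "\<not> (- int n \<le> k \<and> k \<le> 0)"
    proof
      assume h: "- int n \<le> k \<and> k \<le> 0"
      then have "k = (\<lambda>j. - int j) (nat (-k))" "nat (-k) \<in> {..n}" by auto
      then have "k \<in> S" unfolding S_def by (rule image_eqI)
      then show False using kS by simp
    qed
    then consider "k > 0" | "k < - int n" by linarith
    then show "f k = 0"
    proof cases
      case 1
      then have "\<beta> - of_int k < 0" using assms by linarith
      then show ?thesis unfolding f_def by (simp add: Q_neg)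
    next
      case 2
      then have "k \<le> - int n - 1" by linarith
      then have "real_of_int k \<le> - real n - 1" by linarith
      then have "real (Suc n) \<le> \<beta> - of_int k" using assms by simp
      then show ?thesis unfolding f_def by (simp add: Q_big)
    qed
  qed auto
  also have "\<dots> = sum f S" unfolding S_def by simp
  also have "\<dots> = (\<Sum>j\<le>n. f (- int j))"
    unfolding S_def by (subst sum.reindex) (auto simp: inj_on_def)
  also have "\<dots> = (\<Sum>j\<le>n. (1 / t) ^ j * complex_of_real (Bspline (Suc n) (\<beta> + real j)))"
    unfolding f_def by (intro sum.cong refl) (simp add: power_int_minus power_one_over divide_inverse mult.commute power_inverse)
  finally show ?thesis .
qed

lemma poly_G_sum:
  assumes "0 \<le> \<beta>" "\<beta> < 1"
  shows "poly (Gpoly (Suc n) \<beta>) s = (\<Sum>j\<le>n. coeff (Gpoly (Suc n) \<beta>) j * s ^ j)"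
proof -
  have z: "coeff (Gpoly (Suc n) \<beta>) j = 0" if "j > n" for j
  proof -
    have "real (Suc n) \<le> \<beta> + real j" using that assms by simp
    then show ?thesis by (simp add: coeff_G[OF assms] Q_big)
  qed
  then have d: "degree (Gpoly (Suc n) \<beta>) \<le> n" by (intro degree_le) auto
  show ?thesis unfolding poly_altdef
    by (rule sum.mono_neutral_left) (use d z in \<open>auto intro: le_degree\<close>)
qed

lemma neg1_sq: "(-1::complex) ^ k * (-1) ^ k = 1"
  by (simp add: power_mult_distrib[symmetric])

lemma part1_aux: "c \<noteq> 0 \<Longrightarrow> (-1::complex) ^ k / c * ((-1) ^ k * c * q * s) = s * q"
proof -
  assume "c \<noteq> 0"
  have "(-1::complex) ^ k / c * ((-1) ^ k * c * q * s) = ((-1) ^ k * (-1) ^ k) * (c / c) * q * s"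
    by (simp add: algebra_simps)
  also have "\<dots> = s * q" using \<open>c \<noteq> 0\<close> by (simp add: neg1_sq)
  finally show ?thesis .
qed

lemma part1:
  assumes "0 \<le> \<beta>" "\<beta> < 1"
  shows "expspline n \<beta> t = (-1) ^ Suc n / of_nat (fact n) * poly (Gpoly (Suc n) \<beta>) (1 / t)"
  unfolding expspline_sum[OF assms] poly_G_sum[OF assms] coeff_G[OF assms] sum_distrib_left
  by (intro sum.cong refl) (simp only: of_real_mult of_real_power of_real_minus of_real_1 of_real_fact of_nat_fact part1_aux[OF fact_nonzero])

lemma alg:
  fixes t N b c1 c2 P P' :: complex
  assumes "t \<noteq> 0" "c2 * N = - c1"
  shows "t * N * (c2 * ((-b + (1/t) * (b - N)) * P + (1/t) * (-1 + 1/t) * P'))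
     = (N + b * (t - 1)) * (c1 * P) + t * (1 - t) * (c1 * (P' * (- 1 / t ^ 2)))"
proof -
  have "t * N * (c2 * ((-b + (1/t) * (b - N)) * P + (1/t) * (-1 + 1/t) * P'))
      = t * (c2 * N) * ((-b + (1/t) * (b - N)) * P + (1/t) * (-1 + 1/t) * P')"
    by (simp add: algebra_simps)
  also have "\<dots> = - c1 * t * ((-b + (1/t) * (b - N)) * P + (1/t) * (-1 + 1/t) * P')"
    using assms by simp
  also have "\<dots> = (N + b * (t - 1)) * (c1 * P) + t * (1 - t) * (c1 * (P' * (- 1 / t ^ 2)))"
    using assms(1) by (simp add: field_simps power2_eq_square)
  finally show ?thesis .
qed

theorem theorem4p5:
  fixes m :: nat and \<beta> :: real and t :: complex
  assumes "2 \<le> m" and "0 \<le> \<beta>" and "\<beta> < 1" and "t \<noteq> 0" and "t \<noteq> 1"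
  shows "expspline (m - 1) \<beta> t = (-1) ^ m / of_nat (fact (m - 1)) * poly (Gpoly m \<beta>) (1 / t)
    \<and> t * of_nat (m - 1) * expspline (m - 1) \<beta> t =
           (of_nat (m - 1) + complex_of_real \<beta> * (t - 1)) * expspline (m - 2) \<beta> t
           + t * (1 - t) * deriv (expspline (m - 2) \<beta>) t"
proof -
  obtain n where m: "m = Suc (Suc n)" using assms(1) by (metis add_2_eq_Suc le_Suc_ex)
  have b: "0 \<le> \<beta>" "\<beta> < 1" using assms by auto
  define c1 :: complex where "c1 = (-1) ^ Suc n / of_nat (fact n)"
  define c2 :: complex where "c2 = (-1) ^ Suc (Suc n) / of_nat (fact (Suc n))"
  define G1 where "G1 = Gpoly (Suc n) \<beta>"
  have P1: "expspline (Suc n) \<beta> t = c2 * poly (Gpoly (Suc (Suc n)) \<beta>) (1 / t)"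
    unfolding c2_def by (rule part1[OF b])
  have E: "expspline n \<beta> u = c1 * poly G1 (1 / u)" for u
    unfolding c1_def G1_def by (rule part1[OF b])
  have d1: "((\<lambda>u. 1 / u) has_field_derivative - 1 / t ^ 2) (at t)"
    using assms(4) by (auto intro!: derivative_eq_intros simp: power2_eq_square field_simps)
  have d2: "((\<lambda>u. poly G1 (1 / u)) has_field_derivative poly (pderiv G1) (1 / t) * (- 1 / t ^ 2)) (at t)"
    by (rule DERIV_chain2[OF poly_DERIV d1])
  have d3: "(expspline n \<beta> has_field_derivative c1 * (poly (pderiv G1) (1 / t) * (- 1 / t ^ 2))) (at t)"
    using DERIV_cmult[OF d2, of c1] unfolding E .
  have D: "deriv (expspline n \<beta>) t = c1 * (poly (pderiv G1) (1 / t) * (- 1 / t ^ 2))"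
    by (rule DERIV_imp_deriv[OF d3])
  have G2: "poly (Gpoly (Suc (Suc n)) \<beta>) s = (- complex_of_real \<beta> + s * (complex_of_real \<beta> - of_nat (Suc n))) * poly G1 s
     + s * (-1 + s) * poly (pderiv G1) s" for s
    unfolding G1_def by (simp add: algebra_simps)
  have gen: "(-1) ^ Suc (Suc n) / (N * F) * N = - ((-1) ^ Suc n / F)" if "N \<noteq> 0" "F \<noteq> 0" for N F :: complex
    using that by (simp add: field_simps)
  have f: "of_nat (fact (Suc n)) = (of_nat (Suc n) :: complex) * of_nat (fact n)"
    by (simp only: fact_Suc of_nat_mult of_nat_id)
  have cc: "c2 * of_nat (Suc n) = - c1"
    unfolding c1_def c2_def f by (rule gen) (simp_all only: of_nat_eq_0_iff fact_nonzero nat.simps not_False_eq_True)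
  have i: "expspline (Suc n) \<beta> t = (-1) ^ (Suc (Suc n)) / of_nat (fact (Suc n)) * poly (Gpoly (Suc (Suc n)) \<beta>) (1 / t)"
    by (rule part1[OF b])
  have ii: "t * of_nat (Suc n) * expspline (Suc n) \<beta> t = (of_nat (Suc n) + complex_of_real \<beta> * (t - 1)) * expspline n \<beta> t
      + t * (1 - t) * deriv (expspline n \<beta>) t"
    unfolding P1 D E[of t] G2 by (rule alg[OF assms(4) cc])
  have m1: "m - 1 = Suc n" "m - 2 = n" by (simp_all add: m)
  show ?thesis unfolding m1 using i ii unfolding m by blast
qed

end
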